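(* Let $\mathcal{S}=\{S_t\}_{t=1}^T$ be a temporal feedback graph with $K\ge 2$ actions, let $C_1,\dots,C_N$ be its maximal orders, and let $\mathsf{UB}(\mathcal{S})$ be the optimal value of the upper bound program. If Algorithm 1 (described in the context) is run with an optimal solution $\boldsymbol\lambda^*$ of the upper bound program, then its worst-case regret is at most $O(\mathsf{UB}(\mathcal{S})\sqrt{\log K})$.
   Context: Setting: $T$ rounds, action set $\Delta_K$ (probability distributions over $[K]$), loss vectors $\ell_t\in[0,1]^K$. A temporal feedback graph $\mathcal{S}$ is a collection of subsets $S_t\subseteq[T]\setminus\{t\}$, $t\in[T]$; $S_t$ is the set of rounds whose losses are visible at round $t$. An $\mathcal{S}$-learning algorithm is a collection of functions $A_t$ mapping the losses $(\ell_s)_{s\in S_t}$ to an action $x_t\in\Delta_K$. Its regret on a loss sequence $\boldsymbol\ell=(\ell_1,\dots,\ell_T)$ is $\mathrm{Reg}(\mathcal{A},\boldsymbol\ell)=\sum_{t=1}^T\langle x_t,\ell_t\rangle-\min_{x^*\in\Delta_K}\sum_{t=1}^T\langle x^*,\ell_t\rangle$, and its worst-case regret is $\mathrm{Reg}(\mathcal{A})=\max_{\boldsymbol\ell\in([0,1]^K)^T}\mathrm{Reg}(\mathcal{A},\boldsymbol\ell)$. A sequence of rounds $t_1,\dots,t_w$ is an order if $t_u\in S_{t_v}$ for all $u<v$; it is maximal if no super-sequence of it is an order. Let $C_1,\dots,C_N$ be all maximal orders. The upper bound program is: minimize $\sum_{c=1}^N\sqrt{\sum_{t\in C_c}\lambda_{c,t}^2}$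 subject to $\sum_{c=1}^N\lambda_{c,t}=1$ for all $t\in[T]$, $\lambda_{c,t}=0$ if $t\notin C_c$, and $\lambda_{c,t}\ge 0$; $\mathsf{UB}(\mathcal{S})$ denotes its optimal value. Algorithm 1 (input: a feasible $\boldsymbol\lambda$ for the upper bound program): for each $c$ set $\eta_c=\sqrt{(\log K)/\sum_{t\in C_c}\lambda_{c,t}^2}$. At round $t$, for each order $C_c$ containing $t$, let $t_1,\dots,t_w=t$ be the prefix of $C_c$ up to and including $t$ and define $x^{(c)}_t\in\Delta_K$ by $x^{(c)}_{t,i}=\exp(-\eta_c\sum_{u=1}^{w-1}\lambda_{c,t_u}\ell_{t_u,i})/\sum_{j=1}^K\exp(-\eta_c\sum_{u=1}^{w-1}\lambda_{c,t_u}\ell_{t_u,j})$; play $x_t=\sum_{c:\,t\in C_c}\lambda_{c,t}x^{(c)}_t$. *)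

theory Defs
  imports "HOL-Analysis.Analysis" "HOL-Library.Sublist"
begin

text \<open>Rounds are the naturals 1..T; actions are 0..K-1 (i < K).
  A loss sequence is a function l :: nat => nat => real, l t i being the loss of
  action i at round t.
  An order is represented as a list of rounds; a coefficient vector lambda of the
  upper bound program is a function indexed by (maximal order, round).\<close>

definition temporal_feedback_graph :: "nat \<Rightarrow> (nat \<Rightarrow> nat set) \<Rightarrow> bool" where
  "temporal_feedback_graph T S \<longleftrightarrow> (\<forall>t\<in>{1..T}. S t \<subseteq> {1..T} - {t})"

definition is_order :: "nat \<Rightarrow> (nat \<Rightarrow> nat set) \<Rightarrow> nat list \<Rightarrow> bool" where
  "is_order T S ts \<longleftrightarrow> set ts \<subseteq> {1..T} \<and>
     (\<forall>u v. u < v \<and> v < length ts \<longrightarrow> ts ! u \<in> S (ts ! v))"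

definition is_maximal_order :: "nat \<Rightarrow> (nat \<Rightarrow> nat set) \<Rightarrow> nat list \<Rightarrow> bool" where
  "is_maximal_order T S ts \<longleftrightarrow> is_order T S ts \<and>
     \<not> (\<exists>ys. is_order T S ys \<and> strict_subseq ts ys)"

definition maximal_orders :: "nat \<Rightarrow> (nat \<Rightarrow> nat set) \<Rightarrow> nat list set" where
  "maximal_orders T S = {ts. is_maximal_order T S ts}"

definition ub_feasible :: "nat \<Rightarrow> (nat \<Rightarrow> nat set) \<Rightarrow> (nat list \<Rightarrow> nat \<Rightarrow> real) \<Rightarrow> bool" where
  "ub_feasible T S lam \<longleftrightarrow>
     (\<forall>t\<in>{1..T}. (\<Sum>C\<in>maximal_orders T S. lam C t) = 1) \<and>
     (\<forall>C\<in>maximal_orders T S. \<forall>t\<in>{1..T}. t \<notin> set C \<longrightarrow> lam C t = 0) \<and>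
     (\<forall>C\<in>maximal_orders T S. \<forall>t\<in>{1..T}. lam C t \<ge> 0)"

definition ub_objective :: "nat \<Rightarrow> (nat \<Rightarrow> nat set) \<Rightarrow> (nat list \<Rightarrow> nat \<Rightarrow> real) \<Rightarrow> real" where
  "ub_objective T S lam = (\<Sum>C\<in>maximal_orders T S. sqrt (\<Sum>t\<in>set C. (lam C t)^2))"

definition UB :: "nat \<Rightarrow> (nat \<Rightarrow> nat set) \<Rightarrow> real" where
  "UB T S = Inf {ub_objective T S lam | lam. ub_feasible T S lam}"

definition ub_optimal :: "nat \<Rightarrow> (nat \<Rightarrow> nat set) \<Rightarrow> (nat list \<Rightarrow> nat \<Rightarrow> real) \<Rightarrow> bool" where
  "ub_optimal T S lam \<longleftrightarrow> ub_feasible T S lam \<and> ub_objective T S lam = UB T S"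

definition alg_eta :: "nat \<Rightarrow> (nat list \<Rightarrow> nat \<Rightarrow> real) \<Rightarrow> nat list \<Rightarrow> real" where
  "alg_eta K lam C = sqrt (ln (real K) / (\<Sum>t\<in>set C. (lam C t)^2))"

text \<open>Weighted cumulative loss of action i over the rounds of C strictly before t
  (the prefix t_1, ..., t_{w-1} of C, where t_w = t).\<close>
definition alg_cumloss :: "(nat list \<Rightarrow> nat \<Rightarrow> real) \<Rightarrow> (nat \<Rightarrow> nat \<Rightarrow> real) \<Rightarrow> nat list \<Rightarrow> nat \<Rightarrow> nat \<Rightarrow> real" where
  "alg_cumloss lam l C t i = sum_list (map (\<lambda>s. lam C s * l s i) (takeWhile (\<lambda>s. s \<noteq> t) C))"

definition alg_sub_action :: "nat \<Rightarrow> (nat list \<Rightarrow> nat \<Rightarrow> real) \<Rightarrow> (nat \<Rightarrow> nat \<Rightarrow> real) \<Rightarrow> nat list \<Rightarrow> nat \<Rightarrow> nat \<Rightarrow> real" where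
  "alg_sub_action K lam l C t i =
     exp (- alg_eta K lam C * alg_cumloss lam l C t i) /
     (\<Sum>j<K. exp (- alg_eta K lam C * alg_cumloss lam l C t j))"

definition alg_action :: "nat \<Rightarrow> nat \<Rightarrow> (nat \<Rightarrow> nat set) \<Rightarrow> (nat list \<Rightarrow> nat \<Rightarrow> real) \<Rightarrow> (nat \<Rightarrow> nat \<Rightarrow> real) \<Rightarrow> nat \<Rightarrow> nat \<Rightarrow> real" where
  "alg_action T K S lam l t i =
     (\<Sum>C\<in>{C\<in>maximal_orders T S. t \<in> set C}. lam C t * alg_sub_action K lam l C t i)"

definition prob_simplex :: "nat \<Rightarrow> (nat \<Rightarrow> real) set" where
  "prob_simplex K = {x. (\<forall>i<K. x i \<ge> 0) \<and> (\<Sum>i<K. x i) = 1}"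

definition valid_losses :: "nat \<Rightarrow> nat \<Rightarrow> (nat \<Rightarrow> nat \<Rightarrow> real) \<Rightarrow> bool" where
  "valid_losses T K l \<longleftrightarrow> (\<forall>t\<in>{1..T}. \<forall>i<K. 0 \<le> l t i \<and> l t i \<le> 1)"

definition regret :: "nat \<Rightarrow> nat \<Rightarrow> (nat \<Rightarrow> nat \<Rightarrow> real) \<Rightarrow> (nat \<Rightarrow> nat \<Rightarrow> real) \<Rightarrow> real" where
  "regret T K x l =
     (\<Sum>t=1..T. \<Sum>i<K. x t i * l t i) -
     Inf {(\<Sum>t=1..T. \<Sum>i<K. y i * l t i) | y. y \<in> prob_simplex K}"

definition alg_worst_regret :: "nat \<Rightarrow> nat \<Rightarrow> (nat \<Rightarrow> nat set) \<Rightarrow> (nat list \<Rightarrow> nat \<Rightarrow> real) \<Rightarrow> real" where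
  "alg_worst_regret T K S lam =
     Sup {regret T K (alg_action T K S lam l) l | l. valid_losses T K l}"

end

theory Submission
  imports Defs
begin

lemma exp_neg_quad:
  fixes x :: real assumes "0 \<le> x" shows "exp (- x) \<le> 1 - x + x^2/2"
proof -
  let ?f = "\<lambda>x::real. 1 - x + x^2/2 - exp (- x)"
  have "?f 0 \<le> ?f x"
  proof (rule deriv_nonneg_imp_mono[OF _ _ assms])
    fix z :: real
    show "DERIV ?f z :> (- 1 + z + exp (- z))"
      by (auto intro!: derivative_eq_intros simp: power2_eq_square)
    assume z: "z \<in> {0..x}"
    show "0 \<le> - 1 + z + exp (- z)" using exp_ge_add_one_self[of "-z"] by linarith
  qed
  then show ?thesis by simp
qed
lemma hedge:
  fixes g :: "nat \<Rightarrow> nat \<Rightarrow> real" and b :: "nat \<Rightarrow> real" and y :: "nat \<Rightarrow> real"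
  assumes K: "K \<ge> 1" and eta: "\<eta> > 0"
    and g: "\<And>u i. u < n \<Longrightarrow> i < K \<Longrightarrow> 0 \<le> g u i \<and> g u i \<le> b u"
    and y0: "\<And>i. i < K \<Longrightarrow> y i \<ge> 0" and y1: "(\<Sum>i<K. y i) = 1"
  shows "(\<Sum>u<n. \<Sum>i<K. (exp (- \<eta> * (\<Sum>v<u. g v i)) / (\<Sum>j<K. exp (- \<eta> * (\<Sum>v<u. g v j)))) * g u i)
         - (\<Sum>u<n. \<Sum>i<K. y i * g u i) \<le> ln K / \<eta> + \<eta> / 2 * (\<Sum>u<n. (b u)^2)"
proof -
  define L where "L = (\<lambda>u i. \<Sum>v<u. g v i)"
  define W where "W = (\<lambda>u. \<Sum>j<K. exp (- \<eta> * L u j))"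
  define P where "P = (\<lambda>u. \<Sum>i<K. (exp (- \<eta> * L u i) / W u) * g u i)"
  have Wpos: "W u > 0" for u
    unfolding W_def using K by (intro sum_pos) (auto simp: lessThan_empty_iff)
  have step: "W (Suc u) \<le> W u * exp (- \<eta> * P u + \<eta>^2 / 2 * (b u)^2)" if u: "u < n" for u
  proof -
    have b0: "0 \<le> b u" using g[OF u, of 0] K by auto
    have "W (Suc u) = (\<Sum>i<K. exp (- \<eta> * L u i) * exp (- (\<eta> * g u i)))"
      unfolding W_def L_def by (simp add: algebra_simps exp_add[symmetric])
    also have "\<dots> \<le> (\<Sum>i<K. exp (- \<eta> * L u i) * (1 - \<eta> * g u i + \<eta>^2 / 2 * (b u)^2))"
    proof (rule sum_mono, rule mult_left_mono)
      fix i assume i: "i \<in> {..<K}"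
      have gi: "0 \<le> g u i" "g u i \<le> b u" using g[OF u] i by auto
      have "exp (- (\<eta> * g u i)) \<le> 1 - \<eta> * g u i + (\<eta> * g u i)^2/2"
        using exp_neg_quad[of "\<eta> * g u i"] eta gi by auto
      also have "(\<eta> * g u i)^2 \<le> \<eta>^2 * (b u)^2"
        unfolding power_mult_distrib by (intro mult_left_mono power_mono) (use gi in auto)
      finally show "exp (- (\<eta> * g u i)) \<le> 1 - \<eta> * g u i + \<eta>^2 / 2 * (b u)^2" by simp
    qed simp
    also have "\<dots> = W u - \<eta> * (\<Sum>i<K. exp (- \<eta> * L u i) * g u i) + W u * (\<eta>^2 / 2 * (b u)^2)"
      unfolding W_def by (simp add: algebra_simps sum.distrib sum_subtractf sum_distrib_left sum_distrib_right)
    also have "(\<Sum>i<K. exp (- \<eta> * L u i) * g u i) = W u * P u"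
      unfolding P_def sum_distrib_left using Wpos[of u] by (intro sum.cong) auto
    also have "W u - \<eta> * (W u * P u) + W u * (\<eta>^2 / 2 * (b u)^2) = W u * (1 + (- \<eta> * P u + \<eta>^2 / 2 * (b u)^2))"
      by (simp add: algebra_simps)
    also have "\<dots> \<le> W u * exp (- \<eta> * P u + \<eta>^2 / 2 * (b u)^2)"
      using Wpos[of u] exp_ge_add_one_self by (intro mult_left_mono) auto
    finally show ?thesis .
  qed
  have ind: "m \<le> n \<Longrightarrow> W m \<le> K * exp (- \<eta> * (\<Sum>u<m. P u) + \<eta>^2 / 2 * (\<Sum>u<m. (b u)^2))" for m
  proof (induction m)
    case 0
    then show ?case by (simp add: W_def L_def)
  next
    case (Suc m)
    have "W (Suc m) \<le> W m * exp (- \<eta> * P m + \<eta>^2 / 2 * (b m)^2)" using step Suc by auto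
    also have "\<dots> \<le> K * exp (- \<eta> * (\<Sum>u<m. P u) + \<eta>^2 / 2 * (\<Sum>u<m. (b u)^2)) * exp (- \<eta> * P m + \<eta>^2 / 2 * (b m)^2)"
      using Suc by (intro mult_right_mono) auto
    also have "\<dots> = K * exp (- \<eta> * (\<Sum>u<Suc m. P u) + \<eta>^2 / 2 * (\<Sum>u<Suc m. (b u)^2))"
      by (simp add: mult.assoc exp_add[symmetric] algebra_simps)
    finally show ?case .
  qed
  have lnW: "ln (W n) \<le> ln K - \<eta> * (\<Sum>u<n. P u) + \<eta>^2 / 2 * (\<Sum>u<n. (b u)^2)"
  proof -
    have "ln (W n) \<le> ln (K * exp (- \<eta> * (\<Sum>u<n. P u) + \<eta>^2 / 2 * (\<Sum>u<n. (b u)^2)))"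
      using ind[of n] Wpos[of n] by simp
    also have "\<dots> = ln K - \<eta> * (\<Sum>u<n. P u) + \<eta>^2 / 2 * (\<Sum>u<n. (b u)^2)"
      using K by (simp add: ln_mult)
    finally show ?thesis .
  qed
  have low: "- \<eta> * L n i \<le> ln (W n)" if i: "i < K" for i
  proof -
    have "exp (- \<eta> * L n i) \<le> W n"
      unfolding W_def using i by (intro member_le_sum) auto
    then show ?thesis using Wpos[of n] by (metis ln_exp ln_le_cancel_iff exp_gt_zero)
  qed
  have "(\<Sum>i<K. y i * (- \<eta> * L n i)) \<le> (\<Sum>i<K. y i * ln (W n))"
    using low y0 by (intro sum_mono mult_left_mono) auto
  also have "\<dots> = ln (W n)" using y1 by (simp add: sum_distrib_right[symmetric])
  finally have A: "- \<eta> * (\<Sum>i<K. y i * L n i) \<le> ln (W n)"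
    by (simp add: sum_distrib_left algebra_simps)
  have swap: "(\<Sum>u<n. \<Sum>i<K. y i * g u i) = (\<Sum>i<K. y i * L n i)"
    unfolding L_def by (simp add: sum_distrib_left sum.swap[of _ "{..<n}"])
  have "\<eta> * ((\<Sum>u<n. P u) - (\<Sum>i<K. y i * L n i)) \<le> ln K + \<eta>^2 / 2 * (\<Sum>u<n. (b u)^2)"
    using A lnW by (simp add: algebra_simps)
  also have "\<dots> = \<eta> * (ln K / \<eta> + \<eta> / 2 * (\<Sum>u<n. (b u)^2))"
    using eta by (simp add: field_simps power2_eq_square)
  finally have "(\<Sum>u<n. P u) - (\<Sum>i<K. y i * L n i) \<le> ln K / \<eta> + \<eta> / 2 * (\<Sum>u<n. (b u)^2)"
    using eta by simp
  then show ?thesis using swap unfolding P_def W_def L_def by linarith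
qed
lemma sum_set_distinct_nth:
  "distinct C \<Longrightarrow> sum f (set C) = (\<Sum>u<length C. f (C ! u))"
  by (simp add: sum.distinct_set_conv_list sum_list_sum_nth atLeast0LessThan)

lemma takeWhile_nth_distinct:
  "distinct C \<Longrightarrow> u < length C \<Longrightarrow> takeWhile (\<lambda>s. s \<noteq> C ! u) C = take u C"
proof (induction C arbitrary: u)
  case Nil then show ?case by simp
next
  case (Cons a C)
  show ?case
  proof (cases u)
    case 0 then show ?thesis by simp
  next
    case (Suc k)
    have "C ! k \<noteq> a" using Cons.prems Suc by (auto simp: nth_mem)
    then show ?thesis using Cons Suc by simp
  qed
qed

lemma cumloss_nth:
  assumes "distinct C" "u < length C"
  shows "alg_cumloss lam l C (C ! u) i = (\<Sum>v<u. lam C (C ! v) * l (C ! v) i)"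
proof -
  have "alg_cumloss lam l C (C ! u) i = sum_list (map (\<lambda>s. lam C s * l s i) (take u C))"
    unfolding alg_cumloss_def using takeWhile_nth_distinct[OF assms] by simp
  also have "\<dots> = (\<Sum>v<u. lam C (C ! v) * l (C ! v) i)"
    using assms(2) by (simp add: sum_list_sum_nth atLeast0LessThan min_def)
  finally show ?thesis .
qed

lemma order_bound:
  fixes y :: "nat \<Rightarrow> real"
  assumes K: "K \<ge> 2" and dC: "distinct C" and lam0: "\<forall>t\<in>set C. lam C t \<ge> 0"
    and lossC: "\<forall>t\<in>set C. \<forall>i<K. 0 \<le> l t i \<and> l t i \<le> 1"
    and y0: "\<And>i. i < K \<Longrightarrow> y i \<ge> 0" and y1: "(\<Sum>i<K. y i) = 1"
  shows "(\<Sum>t\<in>set C. lam C t * (\<Sum>i<K. alg_sub_action K lam l C t i * l t i))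
       - (\<Sum>t\<in>set C. lam C t * (\<Sum>i<K. y i * l t i))
       \<le> 3/2 * sqrt (\<Sum>t\<in>set C. (lam C t)^2) * sqrt (ln K)"
proof (cases "(\<Sum>t\<in>set C. (lam C t)^2) = 0")
  case True
  then have "\<forall>t\<in>set C. lam C t = 0"
    by (subst (asm) sum_nonneg_eq_0_iff) auto
  then show ?thesis by simp
next
  case False
  define Q where "Q = (\<Sum>t\<in>set C. (lam C t)^2)"
  have Qpos: "Q > 0" using False unfolding Q_def by (metis less_eq_real_def sum_nonneg zero_le_power2)
  have lnK: "ln (real K) > 0" using K by simp
  define \<eta> where "\<eta> = alg_eta K lam C"
  have eta_eq: "\<eta> = sqrt (ln K) / sqrt Q" unfolding \<eta>_def alg_eta_def Q_def by (simp add: real_sqrt_divide)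
  have eta: "\<eta> > 0" using eta_eq Qpos lnK by simp
  define n where "n = length C"
  define g where "g = (\<lambda>u i. lam C (C ! u) * l (C ! u) i)"
  define b where "b = (\<lambda>u. lam C (C ! u))"
  have gb: "0 \<le> g u i \<and> g u i \<le> b u" if "u < n" "i < K" for u i
  proof -
    have m: "C ! u \<in> set C" using that unfolding n_def by simp
    show ?thesis unfolding g_def b_def using lam0 lossC m that
      by (auto intro: mult_left_le)
  qed
  have H: "(\<Sum>u<n. \<Sum>i<K. (exp (- \<eta> * (\<Sum>v<u. g v i)) / (\<Sum>j<K. exp (- \<eta> * (\<Sum>v<u. g v j)))) * g u i)
         - (\<Sum>u<n. \<Sum>i<K. y i * g u i) \<le> ln K / \<eta> + \<eta> / 2 * (\<Sum>u<n. (b u)^2)"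
    by (rule hedge) (use K eta gb y0 y1 in auto)
  have e1: "(\<Sum>t\<in>set C. lam C t * (\<Sum>i<K. alg_sub_action K lam l C t i * l t i))
     = (\<Sum>u<n. \<Sum>i<K. (exp (- \<eta> * (\<Sum>v<u. g v i)) / (\<Sum>j<K. exp (- \<eta> * (\<Sum>v<u. g v j)))) * g u i)"
    unfolding sum_set_distinct_nth[OF dC] n_def
    by (intro sum.cong refl)
       (simp add: sum_distrib_left alg_sub_action_def cumloss_nth[OF dC] g_def \<eta>_def algebra_simps)
  have e2: "(\<Sum>t\<in>set C. lam C t * (\<Sum>i<K. y i * l t i)) = (\<Sum>u<n. \<Sum>i<K. y i * g u i)"
    unfolding sum_set_distinct_nth[OF dC] n_def g_def
    by (simp add: sum_distrib_left algebra_simps)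
  have e3: "(\<Sum>u<n. (b u)^2) = Q"
    unfolding Q_def sum_set_distinct_nth[OF dC] n_def b_def ..
  have e4: "ln K / \<eta> + \<eta> / 2 * Q = 3/2 * sqrt Q * sqrt (ln K)"
  proof -
    have a: "ln (real K) = sqrt (ln K) ^ 2" using lnK by simp
    have q: "Q = sqrt Q ^ 2" using Qpos by simp
    have "sqrt Q > 0" "sqrt (ln K) > 0" using Qpos lnK by auto
    then show ?thesis unfolding eta_eq
      by (subst a, subst (2) q) (simp add: field_simps power2_eq_square)
  qed
  show ?thesis using H unfolding e1 e2 e3 Q_def[symmetric] e4 .
qed

lemma order_distinct:
  assumes "temporal_feedback_graph T S" "is_order T S C"
  shows "distinct C"
proof -
  have "C ! u \<noteq> C ! v" if "u < v" "v < length C" for u v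
  proof
    assume eq: "C ! u = C ! v"
    have "C ! u \<in> S (C ! v)" using assms(2) that unfolding is_order_def by auto
    moreover have "C ! v \<in> {1..T}"
    proof -
      have "C ! v \<in> set C" using that by simp
      then show ?thesis using assms(2) unfolding is_order_def by blast
    qed
    ultimately show False using assms(1) eq unfolding temporal_feedback_graph_def by auto
  qed
  then show ?thesis unfolding distinct_conv_nth
    by (metis linorder_neqE_nat)
qed

theorem theorem1:
  "\<exists>c>0. \<forall>(T::nat) (K::nat) (S::nat \<Rightarrow> nat set) (lam::nat list \<Rightarrow> nat \<Rightarrow> real).
     K \<ge> 2 \<longrightarrow> temporal_feedback_graph T S \<longrightarrow> ub_optimal T S lam \<longrightarrow>
     alg_worst_regret T K S lam \<le> c * UB T S * sqrt (ln (real K))"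
proof (intro exI[of _ "3/2"] conjI allI impI)
  fix T K :: nat and S :: "nat \<Rightarrow> nat set" and lam :: "nat list \<Rightarrow> nat \<Rightarrow> real"
  assume K: "K \<ge> 2" and G: "temporal_feedback_graph T S" and opt: "ub_optimal T S lam"
  define M where "M = maximal_orders T S"
  have Mprop: "distinct C \<and> set C \<subseteq> {1..T}" if "C \<in> M" for C
    using that order_distinct[OF G] unfolding M_def maximal_orders_def is_maximal_order_def is_order_def
    by auto
  have finM: "finite M"
    by (rule finite_subset[OF _ finite_subset_distinct[of "{1..T}"]]) (use Mprop in auto)
  have feas: "ub_feasible T S lam" and UBeq: "UB T S = ub_objective T S lam"
    using opt unfolding ub_optimal_def by auto
  have sum1: "(\<Sum>C\<in>M. lam C t) = 1" if "t \<in> {1..T}" for t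
    using feas that unfolding ub_feasible_def M_def by auto
  have zero: "lam C t = 0" if "C \<in> M" "t \<in> {1..T}" "t \<notin> set C" for C t
    using feas that unfolding ub_feasible_def M_def by auto
  have nonneg: "lam C t \<ge> 0" if "C \<in> M" "t \<in> set C" for C t
    using feas that Mprop[OF that(1)] unfolding ub_feasible_def M_def by auto
  define B where "B = 3/2 * UB T S * sqrt (ln (real K))"
  have Bsum: "B = (\<Sum>C\<in>M. 3/2 * sqrt (\<Sum>t\<in>set C. (lam C t)^2) * sqrt (ln K))"
    unfolding B_def UBeq ub_objective_def M_def[symmetric] by (simp add: sum_distrib_left sum_distrib_right)
  have reg: "regret T K (alg_action T K S lam l) l \<le> B" if vl: "valid_losses T K l" for l
  proof -
    define X where "X = (\<Sum>t=1..T. \<Sum>i<K. alg_action T K S lam l t i * l t i)"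
    have X: "X = (\<Sum>C\<in>M. \<Sum>t\<in>set C. lam C t * (\<Sum>i<K. alg_sub_action K lam l C t i * l t i))"
    proof -
      have "X = (\<Sum>t\<in>{1..T}. \<Sum>C\<in>M. if t \<in> set C then lam C t * (\<Sum>i<K. alg_sub_action K lam l C t i * l t i) else 0)"
        unfolding X_def alg_action_def M_def[symmetric]
      proof (rule sum.cong[OF refl])
        fix t
        have "(\<Sum>i<K. (\<Sum>C\<in>{C \<in> M. t \<in> set C}. lam C t * alg_sub_action K lam l C t i) * l t i)
           = (\<Sum>i<K. \<Sum>C\<in>{C \<in> M. t \<in> set C}. lam C t * alg_sub_action K lam l C t i * l t i)"
          by (simp add: sum_distrib_right)
        also have "\<dots> = (\<Sum>C\<in>{C \<in> M. t \<in> set C}. \<Sum>i<K. lam C t * alg_sub_action K lam l C t i * l t i)"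
          by (rule sum.swap)
        also have "\<dots> = (\<Sum>C\<in>{C \<in> M. t \<in> set C}. lam C t * (\<Sum>i<K. alg_sub_action K lam l C t i * l t i))"
          by (simp add: sum_distrib_left mult.assoc)
        also have "\<dots> = (\<Sum>C\<in>M. if t \<in> set C then lam C t * (\<Sum>i<K. alg_sub_action K lam l C t i * l t i) else 0)"
          by (rule sum.inter_filter[OF finM])
        finally show "(\<Sum>i<K. (\<Sum>C\<in>{C \<in> M. t \<in> set C}. lam C t * alg_sub_action K lam l C t i) * l t i)
           = (\<Sum>C\<in>M. if t \<in> set C then lam C t * (\<Sum>i<K. alg_sub_action K lam l C t i * l t i) else 0)" .
      qed
      also have "\<dots> = (\<Sum>C\<in>M. \<Sum>t\<in>{1..T}. if t \<in> set C then lam C t * (\<Sum>i<K. alg_sub_action K lam l C t i * l t i) else 0)"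
        by (rule sum.swap)
      also have "\<dots> = (\<Sum>C\<in>M. \<Sum>t\<in>set C. lam C t * (\<Sum>i<K. alg_sub_action K lam l C t i * l t i))"
      proof (rule sum.cong[OF refl])
        fix C assume C: "C \<in> M"
        have "{t \<in> {1..T}. t \<in> set C} = set C" using Mprop[OF C] by auto
        then show "(\<Sum>t\<in>{1..T}. if t \<in> set C then lam C t * (\<Sum>i<K. alg_sub_action K lam l C t i * l t i) else 0)
           = (\<Sum>t\<in>set C. lam C t * (\<Sum>i<K. alg_sub_action K lam l C t i * l t i))"
          by (simp add: sum.inter_filter[symmetric])
      qed
      finally show ?thesis .
    qed
    have Y: "(\<Sum>t=1..T. \<Sum>i<K. y i * l t i) = (\<Sum>C\<in>M. \<Sum>t\<in>set C. lam C t * (\<Sum>i<K. y i * l t i))" for y :: "nat \<Rightarrow> real"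
    proof -
      have "(\<Sum>t=1..T. \<Sum>i<K. y i * l t i) = (\<Sum>t\<in>{1..T}. \<Sum>C\<in>M. lam C t * (\<Sum>i<K. y i * l t i))"
        by (intro sum.cong refl) (simp add: sum_distrib_right[symmetric] sum1)
      also have "\<dots> = (\<Sum>C\<in>M. \<Sum>t\<in>{1..T}. lam C t * (\<Sum>i<K. y i * l t i))" by (rule sum.swap)
      also have "\<dots> = (\<Sum>C\<in>M. \<Sum>t\<in>set C. lam C t * (\<Sum>i<K. y i * l t i))"
      proof (rule sum.cong[OF refl])
        fix C assume C: "C \<in> M"
        show "(\<Sum>t\<in>{1..T}. lam C t * (\<Sum>i<K. y i * l t i)) = (\<Sum>t\<in>set C. lam C t * (\<Sum>i<K. y i * l t i))"
          by (rule sum.mono_neutral_right) (use Mprop[OF C] zero[OF C] in auto)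
      qed
      finally show ?thesis .
    qed
    have "X - B \<le> z" if zin: "z \<in> {(\<Sum>t=1..T. \<Sum>i<K. y i * l t i) | y. y \<in> prob_simplex K}" for z
    proof -
      obtain y where y: "y \<in> prob_simplex K" and z: "z = (\<Sum>t=1..T. \<Sum>i<K. y i * l t i)"
        using zin by blast
      have "X - z = (\<Sum>C\<in>M. (\<Sum>t\<in>set C. lam C t * (\<Sum>i<K. alg_sub_action K lam l C t i * l t i))
                     - (\<Sum>t\<in>set C. lam C t * (\<Sum>i<K. y i * l t i)))"
        unfolding X z Y sum_subtractf ..
      also have "\<dots> \<le> B" unfolding Bsum
      proof (rule sum_mono)
        fix C assume C: "C \<in> M"
        show "(\<Sum>t\<in>set C. lam C t * (\<Sum>i<K. alg_sub_action K lam l C t i * l t i))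
                     - (\<Sum>t\<in>set C. lam C t * (\<Sum>i<K. y i * l t i))
              \<le> 3/2 * sqrt (\<Sum>t\<in>set C. (lam C t)^2) * sqrt (ln K)"
          by (rule order_bound)
             (use K Mprop[OF C] nonneg[OF C] vl y in \<open>auto simp: valid_losses_def prob_simplex_def\<close>)
      qed
      finally show ?thesis by simp
    qed
    moreover have "{(\<Sum>t=1..T. \<Sum>i<K. y i * l t i) | y. y \<in> prob_simplex K} \<noteq> {}"
    proof -
      have "(\<lambda>i. if i = 0 then 1 else 0 :: real) \<in> prob_simplex K"
        using K unfolding prob_simplex_def by (auto simp: sum.delta)
      then show ?thesis by blast
    qed
    ultimately have "X - B \<le> Inf {(\<Sum>t=1..T. \<Sum>i<K. y i * l t i) | y. y \<in> prob_simplex K}"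
      by (intro cInf_greatest) auto
    then show ?thesis unfolding regret_def X_def by simp
  qed
  have "valid_losses T K (\<lambda>_ _. 0)" unfolding valid_losses_def by simp
  then have ne: "{regret T K (alg_action T K S lam l) l | l. valid_losses T K l} \<noteq> {}" by blast
  show "alg_worst_regret T K S lam \<le> 3/2 * UB T S * sqrt (ln (real K))"
    unfolding alg_worst_regret_def B_def[symmetric]
    by (rule cSup_least[OF ne]) (use reg in auto)
qed simp

end
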